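(* Let $Q$ be a finite quandle and let $D$ be a diagram of a knot $K$ with $\mathrm{col}_Q(D)>0$. Then there is a finite simple quandle $Q'$ with $|Q'|\le |Q|$ such that $\mathrm{col}_{Q'}(D)>0$.
   Context: A quandle is a set $C$ with a binary operation $*$ such that for all $a,b,c\in C$: (1) $a*a=a$; (2) for all $a,b$ there is a unique $x$ with $a*x=b$; (3) $a*(b*c)=(a*b)*(a*c)$. A quandle is simple if it has at least two elements and its only congruences (equivalence relations compatible with $*$) are the identity relation and the total relation; equivalently, it has no homomorphic images other than itself (up to isomorphism) and the one-element quandle. A knot diagram is a regular planar projection of an oriented tame knot, with over/under information recorded at each crossing. Arcs are the maximal unbroken pieces of the projection. At each crossing, $\alpha$ denotes the over-arc, $\beta$ the under-arc on the right of the oriented $\alpha$, and $\gamma$ the under-arc on its left. A $Q$-coloring of $D$ is a map $f$ from arcs to $Q$ with $f(\alpha)*f(\beta)=f(\gamma)$ at every crossing. It is trivial if it uses only one color. $\mathrm{col}_Q(D)$ is the number of non-trivial $Q$-colorings of $D$. *)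

theory Defs
  imports "HOL-Library.FuncSet"
begin

definition quandle :: "'a set \<Rightarrow> ('a \<Rightarrow> 'a \<Rightarrow> 'a) \<Rightarrow> bool" where
  "quandle C m \<longleftrightarrow>
     (\<forall>a\<in>C. \<forall>b\<in>C. m a b \<in> C) \<and>
     (\<forall>a\<in>C. m a a = a) \<and>
     (\<forall>a\<in>C. \<forall>b\<in>C. \<exists>!x. x \<in> C \<and> m a x = b) \<and>
     (\<forall>a\<in>C. \<forall>b\<in>C. \<forall>c\<in>C. m a (m b c) = m (m a b) (m a c))"

definition quandle_congruence :: "'a set \<Rightarrow> ('a \<Rightarrow> 'a \<Rightarrow> 'a) \<Rightarrow> ('a \<times> 'a) set \<Rightarrow> bool" where
  "quandle_congruence C m R \<longleftrightarrow> equiv C R \<and>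
     (\<forall>a\<in>C. \<forall>b\<in>C. \<forall>c\<in>C. \<forall>d\<in>C. (a, b) \<in> R \<and> (c, d) \<in> R \<longrightarrow> (m a c, m b d) \<in> R)"

definition simple_quandle :: "'a set \<Rightarrow> ('a \<Rightarrow> 'a \<Rightarrow> 'a) \<Rightarrow> bool" where
  "simple_quandle C m \<longleftrightarrow> quandle C m \<and> (\<exists>a\<in>C. \<exists>b\<in>C. a \<noteq> b) \<and>
     (\<forall>R. quandle_congruence C m R \<longrightarrow> R = Id_on C \<or> R = C \<times> C)"

text \<open>A knot diagram with n crossings is encoded by walking along the oriented knot:
  the arcs are numbered 0,...,n-1 in order of traversal (a diagram without crossings has the
  single arc 0); at the k-th undercrossing the knot passes from arc k to arc (k+1) mod n,
  under the over-arc ov k.  The boolean s k records on which side of the oriented over-arc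
  the incoming under-arc lies: if s k then beta = k and gamma = (k+1) mod n, otherwise
  beta = (k+1) mod n and gamma = k.\<close>

record diagram =
  ncross :: nat
  ov :: "nat \<Rightarrow> nat"
  sd :: "nat \<Rightarrow> bool"

definition arcs :: "diagram \<Rightarrow> nat set" where
  "arcs D = {..<max 1 (ncross D)}"

definition wf_diagram :: "diagram \<Rightarrow> bool" where
  "wf_diagram D \<longleftrightarrow> (\<forall>k<ncross D. ov D k < ncross D)"

definition cr_beta :: "diagram \<Rightarrow> nat \<Rightarrow> nat" where
  "cr_beta D k = (if sd D k then k else Suc k mod ncross D)"

definition cr_gamma :: "diagram \<Rightarrow> nat \<Rightarrow> nat" where
  "cr_gamma D k = (if sd D k then Suc k mod ncross D else k)"

definition is_coloring :: "'a set \<Rightarrow> ('a \<Rightarrow> 'a \<Rightarrow> 'a) \<Rightarrow> diagram \<Rightarrow> (nat \<Rightarrow> 'a) \<Rightarrow> bool" where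
  "is_coloring C m D f \<longleftrightarrow> f \<in> arcs D \<rightarrow>\<^sub>E C \<and>
     (\<forall>k<ncross D. m (f (ov D k)) (f (cr_beta D k)) = f (cr_gamma D k))"

definition nontrivial_coloring :: "diagram \<Rightarrow> (nat \<Rightarrow> 'a) \<Rightarrow> bool" where
  "nontrivial_coloring D f \<longleftrightarrow> (\<exists>i\<in>arcs D. \<exists>j\<in>arcs D. f i \<noteq> f j)"

definition col :: "'a set \<Rightarrow> ('a \<Rightarrow> 'a \<Rightarrow> 'a) \<Rightarrow> diagram \<Rightarrow> nat" where
  "col C m D = card {f. is_coloring C m D f \<and> nontrivial_coloring D f}"

end

theory Submission
  imports Defs
begin

lemma q_closed: "quandle C m \<Longrightarrow> a \<in> C \<Longrightarrow> b \<in> C \<Longrightarrow> m a b \<in> C"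
  unfolding quandle_def by blast
lemma q_idem: "quandle C m \<Longrightarrow> a \<in> C \<Longrightarrow> m a a = a"
  unfolding quandle_def by blast
lemma q_ex: "quandle C m \<Longrightarrow> a \<in> C \<Longrightarrow> b \<in> C \<Longrightarrow> \<exists>x\<in>C. m a x = b"
  unfolding quandle_def by blast
lemma q_inj: "quandle C m \<Longrightarrow> a \<in> C \<Longrightarrow> inj_on (m a) C"
proof (rule inj_onI)
  fix x y assume q: "quandle C m" and a: "a \<in> C" and x: "x \<in> C" and y: "y \<in> C" and e: "m a x = m a y"
  have "m a x \<in> C" using q a x by (rule q_closed)
  then have "\<exists>!z. z \<in> C \<and> m a z = m a x" using q a unfolding quandle_def by blast
  then show "x = y" using x y e by metis
qed
lemma q_dist: "quandle C m \<Longrightarrow> a \<in> C \<Longrightarrow> b \<in> C \<Longrightarrow> c \<in> C \<Longrightarrow> m a (m b c) = m (m a b) (m a c)"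
  unfolding quandle_def by blast

lemma cong_cancel:
  assumes q: "quandle C m" and fin: "finite C" and R: "quandle_congruence C m R"
    and a: "a \<in> C" and x: "x \<in> C" and y: "y \<in> C" and r: "(m a x, m a y) \<in> R"
  shows "(x, y) \<in> R"
proof -
  have eq: "equiv C R" using R unfolding quandle_congruence_def by blast
  have sub: "R \<subseteq> C \<times> C" using eq unfolding equiv_def refl_on_def by blast
  have aa: "(a, a) \<in> R" using eq a unfolding equiv_def refl_on_def by blast
  define P where "P = (\<lambda>(u, v). (m a u, m a v))"
  have finR: "finite R" using sub fin by (meson finite_SigmaI rev_finite_subset)
  have inj: "inj_on P R"
  proof (rule inj_onI)
    fix p q assume "p \<in> R" "q \<in> R" "P p = P q"
    then show "p = q" using sub q_inj[OF q a] unfolding P_def inj_on_def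
      by (cases p; cases q) auto
  qed
  have img: "P ` R \<subseteq> R"
  proof
    fix z assume "z \<in> P ` R"
    then obtain u v where uv: "(u, v) \<in> R" "z = (m a u, m a v)" unfolding P_def by auto
    then show "z \<in> R" using R aa a sub unfolding quandle_congruence_def by blast
  qed
  have "P ` R = R" using endo_inj_surj[OF finR img inj] .
  then have "(m a x, m a y) \<in> P ` R" using r by simp
  then obtain u v where uv: "(u, v) \<in> R" "m a u = m a x" "m a v = m a y" unfolding P_def by auto
  have "u = x" using uv sub x q_inj[OF q a] unfolding inj_on_def by blast
  moreover have "v = y" using uv sub y q_inj[OF q a] unfolding inj_on_def by blast
  ultimately show ?thesis using uv by simp
qed

lemma col_pos:
  assumes "finite C" "is_coloring C m D f" "nontrivial_coloring D f"
  shows "col C m D > 0"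
proof -
  have "finite (arcs D)" unfolding arcs_def by simp
  then have "finite (arcs D \<rightarrow>\<^sub>E C)" using assms(1) by (simp add: finite_PiE)
  then have "finite {f. is_coloring C m D f \<and> nontrivial_coloring D f}"
    by (rule rev_finite_subset) (auto simp: is_coloring_def)
  then show ?thesis unfolding col_def using assms(2,3) by (metis (mono_tags, lifting) card_gt_0_iff empty_iff mem_Collect_eq)
qed

lemma zero_arcs: "0 \<in> arcs D" unfolding arcs_def by simp

lemma main:
  assumes wf: "wf_diagram D"
  shows "\<forall>(C::nat set) m f. finite C \<and> card C = n \<and> quandle C m \<and> is_coloring C m D f \<and> nontrivial_coloring D f
     \<longrightarrow> (\<exists>(Q'::nat set) m'. finite Q' \<and> simple_quandle Q' m' \<and> card Q' \<le> n \<and> col Q' m' D > 0)"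
proof (induction n rule: less_induct)
  case (less n)
  show ?case
  proof (intro allI impI)
    fix C :: "nat set" and m f
    assume H: "finite C \<and> card C = n \<and> quandle C m \<and> is_coloring C m D f \<and> nontrivial_coloring D f"
    then have fin: "finite C" and cn: "card C = n" and q: "quandle C m"
      and fc: "is_coloring C m D f" and nt: "nontrivial_coloring D f" by auto
    have fC: "\<And>i. i \<in> arcs D \<Longrightarrow> f i \<in> C" using fc unfolding is_coloring_def by auto
    have two: "\<exists>a\<in>C. \<exists>b\<in>C. a \<noteq> b" using nt fC unfolding nontrivial_coloring_def by metis
    show "\<exists>(Q'::nat set) m'. finite Q' \<and> simple_quandle Q' m' \<and> card Q' \<le> n \<and> col Q' m' D > 0"
    proof (cases "simple_quandle C m")
      case True
      then show ?thesis using fin cn col_pos[OF fin fc nt] by auto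
    next
      case False
      then obtain R where R: "quandle_congruence C m R" and RI: "R \<noteq> Id_on C" and RT: "R \<noteq> C \<times> C"
        using q two unfolding simple_quandle_def by blast
      have eq: "equiv C R" using R unfolding quandle_congruence_def by blast
      have sub: "R \<subseteq> C \<times> C" using eq unfolding equiv_def refl_on_def by blast
      have refl: "\<And>x. x \<in> C \<Longrightarrow> (x, x) \<in> R" using eq unfolding equiv_def refl_on_def by blast
      have sym: "\<And>x y. (x, y) \<in> R \<Longrightarrow> (y, x) \<in> R" using eq unfolding equiv_def sym_def by blast
      have trans: "\<And>x y z. (x, y) \<in> R \<Longrightarrow> (y, z) \<in> R \<Longrightarrow> (x, z) \<in> R" using eq unfolding equiv_def trans_def by blast
      have cg: "\<And>a b c d. (a, b) \<in> R \<Longrightarrow> (c, d) \<in> R \<Longrightarrow> (m a c, m b d) \<in> R"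
        using R sub unfolding quandle_congruence_def by blast
      show ?thesis
      proof (cases "\<exists>i\<in>arcs D. \<exists>j\<in>arcs D. (f i, f j) \<notin> R")
        case True
        then obtain i j where ij: "i \<in> arcs D" "j \<in> arcs D" "(f i, f j) \<notin> R" by blast
        define rep where "rep x = (SOME y. (x, y) \<in> R)" for x
        have rep1: "(x, rep x) \<in> R" if "x \<in> C" for x
          unfolding rep_def using refl[OF that] by (rule someI)
        have repC: "rep x \<in> C" if "x \<in> C" for x using rep1[OF that] sub by blast
        have repeq: "rep x = rep y" if "(x, y) \<in> R" for x y
        proof -
          have "{z. (x, z) \<in> R} = {z. (y, z) \<in> R}" using that sym trans by blast
          then have "(\<lambda>z. (x, z) \<in> R) = (\<lambda>z. (y, z) \<in> R)" by (simp add: set_eq_iff fun_eq_iff)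
          then show ?thesis unfolding rep_def by simp
        qed
        have repR: "(x, y) \<in> R" if "x \<in> C" "y \<in> C" "rep x = rep y" for x y
        proof -
          have "(x, rep y) \<in> R" using rep1[OF that(1)] that(3) by simp
          then show ?thesis using trans sym[OF rep1[OF that(2)]] by blast
        qed
        have reprep: "rep (rep x) = rep x" if "x \<in> C" for x
          using repeq[OF sym[OF rep1[OF that]]] .
        define C' where "C' = rep ` C"
        define m' where "m' a b = rep (m a b)" for a b
        have C'C: "C' \<subseteq> C" unfolding C'_def using repC by blast
        have fixC': "rep a = a" if "a \<in> C'" for a using that reprep unfolding C'_def by auto
        have q': "quandle C' m'"
          unfolding quandle_def
        proof (intro conjI ballI)
          fix a b assume "a \<in> C'" "b \<in> C'"
          then have "m a b \<in> C" using q_closed[OF q] C'C by blast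
          then show "m' a b \<in> C'" unfolding m'_def C'_def by (rule imageI)
        next
          fix a assume "a \<in> C'" then show "m' a a = a" unfolding m'_def
            using q_idem[OF q] C'C fixC' by auto
        next
          fix a b assume a: "a \<in> C'" and b: "b \<in> C'"
          then obtain x where x: "x \<in> C" "m a x = b" using q_ex[OF q] C'C by blast
          have ex: "rep x \<in> C' \<and> m' a (rep x) = b"
          proof -
            have "(m a (rep x), m a x) \<in> R" using cg[OF refl sym[OF rep1[OF x(1)]]] a C'C by blast
            then have "m' a (rep x) = rep b" unfolding m'_def using repeq x by simp
            then show ?thesis using fixC'[OF b] x unfolding C'_def by simp
          qed
          show "\<exists>!x. x \<in> C' \<and> m' a x = b"
          proof (rule ex1I[of _ "rep x"])
            show "rep x \<in> C' \<and> m' a (rep x) = b" using ex .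
          next
            fix y assume y: "y \<in> C' \<and> m' a y = b"
            have aC: "a \<in> C" and yC: "y \<in> C" and rC: "rep x \<in> C" using a y x C'C repC by auto
            have "rep (m a y) = rep (m a (rep x))" using y ex unfolding m'_def by simp
            then have "(m a y, m a (rep x)) \<in> R"
              by (rule repR[OF q_closed[OF q aC yC] q_closed[OF q aC rC]])
            then have "(y, rep x) \<in> R" by (rule cong_cancel[OF q fin R aC yC rC])
            then have "rep y = rep (rep x)" by (rule repeq)
            then show "y = rep x" using fixC' y ex by simp
          qed
        next
          fix a b c assume a: "a \<in> C'" and b: "b \<in> C'" and c: "c \<in> C'"
          have aC: "a \<in> C" and bC: "b \<in> C" and cC: "c \<in> C" using a b c C'C by auto
          have bc: "m b c \<in> C" "m a b \<in> C" "m a c \<in> C" using q_closed[OF q] aC bC cC by auto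
          have "(m a (rep (m b c)), m a (m b c)) \<in> R" using cg[OF refl[OF aC] sym[OF rep1[OF bc(1)]]] .
          moreover have "(m (rep (m a b)) (rep (m a c)), m (m a b) (m a c)) \<in> R"
            using cg[OF sym[OF rep1[OF bc(2)]] sym[OF rep1[OF bc(3)]]] .
          ultimately have "rep (m a (rep (m b c))) = rep (m a (m b c))"
            "rep (m (rep (m a b)) (rep (m a c))) = rep (m (m a b) (m a c))" by (auto intro: repeq)
          then show "m' a (m' b c) = m' (m' a b) (m' a c)" unfolding m'_def
            using q_dist[OF q aC bC cC] by simp
        qed
        define f' where "f' = restrict (rep \<circ> f) (arcs D)"
        have fc': "is_coloring C' m' D f'"
          unfolding is_coloring_def
        proof (intro conjI allI impI)
          show "f' \<in> arcs D \<rightarrow>\<^sub>E C'" unfolding f'_def C'_def using fC by auto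
        next
          fix k assume k: "k < ncross D"
          have ar: "ov D k \<in> arcs D" "cr_beta D k \<in> arcs D" "cr_gamma D k \<in> arcs D"
            using fc k unfolding is_coloring_def
            using wf by (auto simp: arcs_def cr_beta_def cr_gamma_def wf_diagram_def)
          have "(m (rep (f (ov D k))) (rep (f (cr_beta D k))), m (f (ov D k)) (f (cr_beta D k))) \<in> R"
            using cg[OF sym[OF rep1[OF fC[OF ar(1)]]] sym[OF rep1[OF fC[OF ar(2)]]]] .
          then show "m' (f' (ov D k)) (f' (cr_beta D k)) = f' (cr_gamma D k)"
          proof -
            assume h: "(m (rep (f (ov D k))) (rep (f (cr_beta D k))), m (f (ov D k)) (f (cr_beta D k))) \<in> R"
            have fk: "m (f (ov D k)) (f (cr_beta D k)) = f (cr_gamma D k)" using fc k unfolding is_coloring_def by blast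
            have "rep (m (rep (f (ov D k))) (rep (f (cr_beta D k)))) = rep (f (cr_gamma D k))"
              using repeq[OF h] fk by simp
            then show ?thesis unfolding f'_def m'_def using ar by simp
          qed
        qed
        have "rep (f i) \<noteq> rep (f j)" using ij repR[OF fC[OF ij(1)] fC[OF ij(2)]] by blast
        then have nt': "nontrivial_coloring D f'"
          unfolding nontrivial_coloring_def f'_def using ij by auto
        have "\<not> inj_on rep C"
        proof
          assume inj: "inj_on rep C"
          have "R \<subseteq> Id_on C"
          proof
            fix p assume "p \<in> R"
            then obtain x y where "p = (x, y)" "(x, y) \<in> R" "x \<in> C" "y \<in> C" using sub by auto
            then show "p \<in> Id_on C" using repeq inj unfolding inj_on_def by auto
          qed
          moreover have "Id_on C \<subseteq> R" using refl by auto
          ultimately show False using RI by blast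
        qed
        then have "card (rep ` C) \<noteq> card C" using eq_card_imp_inj_on[OF fin, of rep] by (rule contrapos_nn)
        then have lt: "card C' < n" unfolding C'_def using cn card_image_le[OF fin, of rep] by linarith
        have finC': "finite C'" using C'C fin by (rule rev_finite_subset[rotated])
        have "finite C' \<and> card C' = card C' \<and> quandle C' m' \<and> is_coloring C' m' D f' \<and> nontrivial_coloring D f'"
          using finC' q' fc' nt' by simp
        from less.IH[OF lt, rule_format, OF this]
        obtain Q' :: "nat set" and m'' where Q: "finite Q'" "simple_quandle Q' m''" "card Q' \<le> card C'" "col Q' m'' D > 0"
          by (elim exE conjE) blast
        have "card Q' \<le> n" using Q(3) lt by linarith
        then show ?thesis using Q(1,2,4) by (intro exI[of _ Q'] exI[of _ m'']) simp
      next
        case False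
        have z: "0 \<in> arcs D" by (rule zero_arcs)
        define S where "S = R `` {f 0}"
        have SC: "S \<subseteq> C" unfolding S_def using sub by auto
        have fS: "f i \<in> S" if "i \<in> arcs D" for i using False z that unfolding S_def by blast
        have inS: "(a, b) \<in> R" if "a \<in> S" "b \<in> S" for a b
          using that sym trans unfolding S_def by blast
        have toS: "b \<in> S" if "a \<in> S" "(a, b) \<in> R" for a b
          using that trans unfolding S_def by blast
        have qS: "quandle S m"
          unfolding quandle_def
        proof (intro conjI ballI)
          fix a b assume a: "a \<in> S" and b: "b \<in> S"
          have "(m a a, m a b) \<in> R" using cg[OF refl[of a] inS[OF a b]] a SC by blast
          then show "m a b \<in> S" using toS[OF a] q_idem[OF q] a SC by auto
        next
          fix a assume "a \<in> S" then show "m a a = a" using q_idem[OF q] SC by auto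
        next
          fix a b assume a: "a \<in> S" and b: "b \<in> S"
          then obtain x where x: "x \<in> C" "m a x = b" using q_ex[OF q] SC by blast
          have "(m a a, m a x) \<in> R" using inS[OF a b] x q_idem[OF q] a SC by auto
          then have "(a, x) \<in> R" using cong_cancel[OF q fin R] a x SC by blast
          then have xS: "x \<in> S" using toS a by blast
          show "\<exists>!x. x \<in> S \<and> m a x = b"
            using xS x q_inj[OF q, of a] a SC unfolding inj_on_def by blast
        next
          fix a b c assume "a \<in> S" "b \<in> S" "c \<in> S"
          then show "m a (m b c) = m (m a b) (m a c)" using q_dist[OF q] SC by blast
        qed
        have fcS: "is_coloring S m D f" using fc fS unfolding is_coloring_def by auto
        have "S \<noteq> C"
        proof
          assume "S = C"
          then have "\<forall>x\<in>C. \<forall>y\<in>C. (x, y) \<in> R" using inS by blast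
          then have "R = C \<times> C" using sub by auto
          then show False using RT by simp
        qed
        then have lt: "card S < n" using SC fin cn by (meson psubsetI psubset_card_mono)
        have finS: "finite S" using SC fin by (rule rev_finite_subset[rotated])
        have "finite S \<and> card S = card S \<and> quandle S m \<and> is_coloring S m D f \<and> nontrivial_coloring D f"
          using finS qS fcS nt by simp
        from less.IH[OF lt, rule_format, OF this]
        obtain Q' :: "nat set" and m'' where Q: "finite Q'" "simple_quandle Q' m''" "card Q' \<le> card S" "col Q' m'' D > 0"
          by (elim exE conjE) blast
        have "card Q' \<le> n" using Q(3) lt by linarith
        then show ?thesis using Q(1,2,4) by (intro exI[of _ Q'] exI[of _ m'']) simp
      qed
    qed
  qed
qed


lemma transport:
  fixes Q :: "'a set" and m :: "'a \<Rightarrow> 'a \<Rightarrow> 'a"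
  assumes wf: "wf_diagram D" and q: "quandle Q m" and fin: "finite Q" and fc: "is_coloring Q m D f" and nt: "nontrivial_coloring D f"
  shows "\<exists>(C::nat set) m' f'. finite C \<and> card C = card Q \<and> quandle C m' \<and> is_coloring C m' D f' \<and> nontrivial_coloring D f'"
proof -
  obtain g where g: "bij_betw g Q {0..<card Q}" using ex_bij_betw_finite_nat[OF fin] by blast
  define C where "C = {0..<card Q}"
  define h where "h = inv_into Q g"
  have gC: "\<And>x. x \<in> Q \<Longrightarrow> g x \<in> C" using g unfolding C_def bij_betw_def by blast
  have hQ: "\<And>y. y \<in> C \<Longrightarrow> h y \<in> Q" using g unfolding C_def h_def
    by (metis bij_betw_def inv_into_into)
  have hg: "\<And>x. x \<in> Q \<Longrightarrow> h (g x) = x" using g unfolding h_def bij_betw_def by (simp add: inv_into_f_f)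
  have gh: "\<And>y. y \<in> C \<Longrightarrow> g (h y) = y" using g unfolding h_def C_def bij_betw_def by (simp add: f_inv_into_f)
  define m' where "m' a b = g (m (h a) (h b))" for a b
  have q': "quandle C m'"
    unfolding quandle_def
  proof (intro conjI ballI)
    fix a b assume "a \<in> C" "b \<in> C"
    then show "m' a b \<in> C" unfolding m'_def using gC hQ q_closed[OF q] by blast
  next
    fix a assume "a \<in> C" then show "m' a a = a" unfolding m'_def using gh hQ q_idem[OF q] by simp
  next
    fix a b assume a: "a \<in> C" and b: "b \<in> C"
    obtain x where x: "x \<in> Q" "m (h a) x = h b" using q_ex[OF q hQ[OF a] hQ[OF b]] by blast
    show "\<exists>!y. y \<in> C \<and> m' a y = b"
    proof (rule ex1I[of _ "g x"])
      show "g x \<in> C \<and> m' a (g x) = b" unfolding m'_def using gC x hg gh b by simp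
    next
      fix y assume y: "y \<in> C \<and> m' a y = b"
      have "g (m (h a) (h y)) = g (m (h a) x)" using y x gh b unfolding m'_def by simp
      then have "m (h a) (h y) = m (h a) x"
        using g q_closed[OF q] hQ a y x unfolding bij_betw_def inj_on_def by blast
      then have "h y = x" using q_inj[OF q hQ[OF a]] hQ y x unfolding inj_on_def by blast
      then show "y = g x" using gh y by force
    qed
  next
    fix a b c assume a: "a \<in> C" and b: "b \<in> C" and c: "c \<in> C"
    have cl: "m (h b) (h c) \<in> Q" "m (h a) (h b) \<in> Q" "m (h a) (h c) \<in> Q"
      using q_closed[OF q] hQ a b c by auto
    show "m' a (m' b c) = m' (m' a b) (m' a c)" unfolding m'_def
      using hg cl q_dist[OF q hQ[OF a] hQ[OF b] hQ[OF c]] by simp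
  qed
  define f' where "f' = restrict (g \<circ> f) (arcs D)"
  have fQ: "\<And>i. i \<in> arcs D \<Longrightarrow> f i \<in> Q" using fc unfolding is_coloring_def by auto
  have fe: "\<And>i. i \<notin> arcs D \<Longrightarrow> f i = undefined" using fc unfolding is_coloring_def by auto
  have fc': "is_coloring C m' D f'"
    unfolding is_coloring_def
  proof (intro conjI allI impI)
    show "f' \<in> arcs D \<rightarrow>\<^sub>E C" unfolding f'_def using fQ gC by auto
  next
    fix k assume k: "k < ncross D"
    have fk: "m (f (ov D k)) (f (cr_beta D k)) = f (cr_gamma D k)" using fc k unfolding is_coloring_def by blast
    have gam: "cr_gamma D k \<in> arcs D"
      using k by (auto simp: arcs_def cr_gamma_def)
    have bet: "cr_beta D k \<in> arcs D"
      using k by (auto simp: arcs_def cr_beta_def)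
    have ovk: "ov D k \<in> arcs D" using wf k by (auto simp: arcs_def wf_diagram_def)
    then show "m' (f' (ov D k)) (f' (cr_beta D k)) = f' (cr_gamma D k)"
      unfolding f'_def m'_def using fk fQ hg bet gam by simp
  qed
  obtain i j where ij: "i \<in> arcs D" "j \<in> arcs D" "f i \<noteq> f j" using nt unfolding nontrivial_coloring_def by blast
  have "g (f i) \<noteq> g (f j)" using ij fQ g unfolding bij_betw_def inj_on_def by blast
  then have nt': "nontrivial_coloring D f'"
    using ij unfolding nontrivial_coloring_def f'_def by auto
  show ?thesis using q' fc' nt' unfolding C_def by (intro exI[of _ C] exI[of _ m'] exI[of _ f']) (simp add: C_def)
qed

theorem lemma2:
  fixes Q :: "'a set" and m :: "'a \<Rightarrow> 'a \<Rightarrow> 'a" and D :: diagram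
  assumes "quandle Q m" and "finite Q"
    and "wf_diagram D"
    and "col Q m D > 0"
  shows "\<exists>(Q' :: nat set) m'. finite Q' \<and> simple_quandle Q' m' \<and> card Q' \<le> card Q \<and> col Q' m' D > 0"
proof -
  have "{f. is_coloring Q m D f \<and> nontrivial_coloring D f} \<noteq> {}"
    using assms(4) unfolding col_def by (metis card.empty less_irrefl)
  then obtain f where fc: "is_coloring Q m D f" and nt: "nontrivial_coloring D f" by blast
  obtain C :: "nat set" and m' f' where H: "finite C" "card C = card Q" "quandle C m'" "is_coloring C m' D f'" "nontrivial_coloring D f'"
    using transport[OF assms(3,1,2) fc nt] by (elim exE conjE) blast
  have "finite C \<and> card C = card Q \<and> quandle C m' \<and> is_coloring C m' D f' \<and> nontrivial_coloring D f'"
    using H by simp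
  from main[OF assms(3), of "card Q", rule_format, OF this] show ?thesis .
qed

end
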